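(* (a) The map $\Phi$ is reversible with respect to the involution $\sigma(p,u)=(u,p)$: $\Phi^{-1}(p,u)=\sigma\circ\Phi(u,p)$ (wherever defined). (b) For the trajectory $T_n$ with coordinates $(p_j,u_j)$, $u_j=p_{n-j}$ for $0\le j\le n$; in particular $u_n=p_0$. (c) If $n=2k$ then $p_k=u_k$; if $n=2k-1$ then $p_{k-1}=u_k=1$.
   Context: $\Phi$ is the partial map of $\mathbb{R}^2$ defined for $p\ne0$ by $\Phi(p,u)=\bigl(p^2(u+1)-1,\ 1/p\bigr)$. For $n\ge1$, the trajectory $T_n$ is the (existing and unique) finite sequence $(p_j,u_j)$, $j=0,\dots,n$, with $(p_j,u_j)=\Phi(p_{j-1},u_{j-1})$ for $1\le j\le n$, $u_0=0$, $p_n=0$, and $p_j>0$ for $0\le j\le n-1$. *)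

theory Defs
  imports Complex_Main
begin

text \<open>The map Phi(p,u) = (p^2 (u+1) - 1, 1/p); it is only meaningful for p \<noteq> 0
  (in HOL, 1/0 = 0, so every use is guarded by p \<noteq> 0).\<close>
definition Phi :: "real \<times> real \<Rightarrow> real \<times> real" where
  "Phi pu = (case pu of (p, u) \<Rightarrow> (p^2 * (u + 1) - 1, 1 / p))"

definition sigma :: "real \<times> real \<Rightarrow> real \<times> real" where
  "sigma pu = (case pu of (p, u) \<Rightarrow> (u, p))"

definition trajectory :: "nat \<Rightarrow> (nat \<Rightarrow> real) \<Rightarrow> (nat \<Rightarrow> real) \<Rightarrow> bool" where
  "trajectory n p u \<longleftrightarrow> 1 \<le> n \<and> u 0 = 0 \<and> p n = 0 \<and>
     (\<forall>j<n. p j > 0) \<and>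
     (\<forall>j. 1 \<le> j \<and> j \<le> n \<longrightarrow> (p j, u j) = Phi (p (j - 1), u (j - 1)))"

end

theory Submission
  imports Defs
begin

lemma traj_step:
  assumes "trajectory n p u" "1 \<le> j" "j \<le> n"
  shows "p j = (p (j-1))^2 * (u (j-1) + 1) - 1 \<and> u j = 1 / p (j-1)"
  using assms unfolding trajectory_def Phi_def by auto

lemma traj_u_nonneg:
  assumes "trajectory n p u" "j < n"
  shows "u j \<ge> 0"
proof (cases j)
  case 0 then show ?thesis using assms unfolding trajectory_def by auto
next
  case (Suc i)
  then have "u j = 1 / p i" using traj_step[OF assms(1), of j] assms(2) by auto
  moreover have "p i > 0" using assms Suc unfolding trajectory_def by auto
  ultimately show ?thesis by simp
qed

lemma traj_mono:
  assumes T: "trajectory n p u" and T': "trajectory n q v" and lt: "p 0 < q 0"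
  shows "j < n \<Longrightarrow> p j < q j \<and> p j * (u j + 1) < q j * (v j + 1)"
proof (induction j)
  case 0
  have "u 0 = 0" "v 0 = 0" using T T' unfolding trajectory_def by auto
  then show ?case using lt by simp
next
  case (Suc j)
  then have IH: "p j < q j" "p j * (u j + 1) < q j * (v j + 1)" by auto
  have pj: "p j > 0" "q j > 0" using T T' Suc.prems unfolding trajectory_def by auto
  have uj: "u j \<ge> 0" "v j \<ge> 0" using traj_u_nonneg[OF T] traj_u_nonneg[OF T'] Suc.prems by auto
  have sp: "p (Suc j) = p j * (p j * (u j + 1)) - 1" "u (Suc j) = 1 / p j"
    using traj_step[OF T, of "Suc j"] Suc.prems by (auto simp: power2_eq_square)
  have sq: "q (Suc j) = q j * (q j * (v j + 1)) - 1" "v (Suc j) = 1 / q j"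
    using traj_step[OF T', of "Suc j"] Suc.prems by (auto simp: power2_eq_square)
  have Bpos: "p j * (u j + 1) > 0" using pj uj by simp
  have A: "p j * (p j * (u j + 1)) < q j * (q j * (v j + 1))"
    using IH pj Bpos by (meson less_trans mult_strict_mono order_less_imp_le)
  hence A': "p (Suc j) < q (Suc j)" using sp sq by simp
  have eB: "p (Suc j) * (u (Suc j) + 1) = p (Suc j) + p j * (u j + 1) - 1 / p j"
    using pj by (simp add: sp field_simps)
  have eB': "q (Suc j) * (v (Suc j) + 1) = q (Suc j) + q j * (v j + 1) - 1 / q j"
    using pj by (simp add: sq field_simps)
  have "1 / q j < 1 / p j" using pj IH by (simp add: frac_less2)
  then show ?case using A' eB eB' IH by simp
qed

lemma traj_eq:
  assumes T: "trajectory n p u" and T': "trajectory n q v" and e: "p 0 = q 0"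
  shows "j \<le> n \<Longrightarrow> p j = q j \<and> u j = v j"
proof (induction j)
  case 0 then show ?case using T T' e unfolding trajectory_def by auto
next
  case (Suc j)
  then show ?case using traj_step[OF T, of "Suc j"] traj_step[OF T', of "Suc j"] by auto
qed

lemma traj_p0:
  assumes T: "trajectory n p u" and T': "trajectory n q v"
  shows "p 0 = q 0"
proof -
  have n: "1 \<le> n" using T unfolding trajectory_def by auto
  have z: "p n = 0" "q n = 0" using T T' unfolding trajectory_def by auto
  have gen: "p n < q n" if A: "trajectory n p u" and B: "trajectory n q v" and l: "p 0 < q 0"
    for p u q v
  proof -
    have h: "p (n-1) < q (n-1)" "p (n-1) * (u (n-1) + 1) < q (n-1) * (v (n-1) + 1)"
      using traj_mono[OF A B l, of "n-1"] n by auto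
    have pj: "p (n-1) > 0" "q (n-1) > 0" using A B n unfolding trajectory_def by auto
    have uj: "u (n-1) \<ge> 0" using traj_u_nonneg[OF A, of "n-1"] n by auto
    have Bpos: "p (n-1) * (u (n-1) + 1) > 0" using pj uj by simp
    have "p (n-1) * (p (n-1) * (u (n-1) + 1)) < q (n-1) * (q (n-1) * (v (n-1) + 1))"
      using h pj Bpos by (meson less_trans mult_strict_mono order_less_imp_le)
    moreover have "p n = p (n-1) * (p (n-1) * (u (n-1) + 1)) - 1"
      using traj_step[OF A, of n] n by (simp add: power2_eq_square)
    moreover have "q n = q (n-1) * (q (n-1) * (v (n-1) + 1)) - 1"
      using traj_step[OF B, of n] n by (simp add: power2_eq_square)
    ultimately show ?thesis by simp
  qed
  show ?thesis
  proof (rule ccontr)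
    assume "p 0 \<noteq> q 0"
    then consider "p 0 < q 0" | "q 0 < p 0" by linarith
    then show False
    proof cases
      case 1 then show False using gen[OF T T'] z by simp
    next
      case 2 then show False using gen[OF T' T] z by simp
    qed
  qed
qed

lemma traj_rev:
  assumes T: "trajectory n p u"
  shows "trajectory n (\<lambda>j. u (n-j)) (\<lambda>j. p (n-j))"
proof -
  have n: "1 \<le> n" "u 0 = 0" "p n = 0" using T unfolding trajectory_def by auto
  have pos: "u (n-j) > 0" if "j < n" for j
  proof -
    have "u (n-j) = 1 / p (n-j-1)" using traj_step[OF T, of "n-j"] that by auto
    moreover have "p (n-j-1) > 0" using T that unfolding trajectory_def by auto
    ultimately show ?thesis by simp
  qed
  have rec: "(u (n-j), p (n-j)) = Phi (u (n-(j-1)), p (n-(j-1)))" if "1 \<le> j" "j \<le> n" for j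
  proof -
    define i where "i = n - j + 1"
    have i: "1 \<le> i" "i \<le> n" "n-(j-1) = i" "n - j = i - 1" using that i_def by auto
    have st: "p i = (p (i-1))^2 * (u (i-1) + 1) - 1" "u i = 1 / p (i-1)"
      using traj_step[OF T i(1,2)] by auto
    have "p (i-1) > 0" using T i unfolding trajectory_def by auto
    then have "Phi (u i, p i) = (u (i-1), p (i-1))"
      unfolding Phi_def by (simp add: st field_simps power2_eq_square)
    then show ?thesis using i by simp
  qed
  show ?thesis unfolding trajectory_def using n pos rec by auto
qed

theorem lemma3:
  shows "((\<forall>p u. u \<noteq> 0 \<longrightarrow> Phi (sigma (Phi (sigma (p, u)))) = (p, u)) \<and>
          (\<forall>p u. p \<noteq> 0 \<longrightarrow> sigma (Phi (sigma (Phi (p, u)))) = (p, u))) \<and>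
         (\<forall>n p u. trajectory n p u \<longrightarrow>
            (\<forall>j\<le>n. u j = p (n - j)) \<and> u n = p 0 \<and>
            (\<forall>k. n = 2 * k \<longrightarrow> p k = u k) \<and>
            (\<forall>k. n + 1 = 2 * k \<longrightarrow> p (k - 1) = 1 \<and> u k = 1))"
proof (intro conjI allI impI)
  fix p u :: real assume "u \<noteq> 0"
  then show "Phi (sigma (Phi (sigma (p, u)))) = (p, u)"
    unfolding Phi_def sigma_def by (simp add: field_simps power2_eq_square)
next
  fix p u :: real assume "p \<noteq> 0"
  then show "sigma (Phi (sigma (Phi (p, u)))) = (p, u)"
    unfolding Phi_def sigma_def by (simp add: field_simps power2_eq_square)
next
  fix n p u assume T: "trajectory n p u"
  have R: "trajectory n (\<lambda>j. u (n-j)) (\<lambda>j. p (n-j))" by (rule traj_rev[OF T])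
  have e0: "p 0 = u n" using traj_p0[OF T R] by simp
  have E: "p j = u (n-j)" if "j \<le> n" for j
    using traj_eq[OF T R _ that] e0 by auto
  show A: "u j = p (n-j)" if "j \<le> n" for j
    using E[of "n-j"] that by auto
  show "u n = p 0" using e0 by simp
  show "p k = u k" if "n = 2*k" for k using A[of k] that by auto
  {
    fix k assume k: "n + 1 = 2*k"
    have n1: "1 \<le> n" using T unfolding trajectory_def by auto
    have "n - k = k - 1" using k by linarith
    moreover have "k \<le> n" using k n1 by linarith
    ultimately have "u k = p (k-1)" using A[of k] by simp
    moreover have "u k = 1 / p (k-1)" using traj_step[OF T, of k] k n1 by auto
    moreover have "p (k-1) > 0" using T k unfolding trajectory_def by auto
    ultimately have sq: "p (k-1) * p (k-1) = 1" "p (k-1) > 0" by (auto simp: field_simps)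
    then have "(p (k-1) - 1) * (p (k-1) + 1) = 0" by (simp add: algebra_simps)
    then have "p (k-1) = 1" using sq(2) by simp
    then show "p (k-1) = 1" "u k = 1" using \<open>u k = p (k-1)\<close> by auto
  }
qed

end
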